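(* Let $G=(V,E)$ be a graph with edge weights, let $V_{cover}\subseteq V$ be a vertex cover of $G$, and let $G'$ be the subgraph consisting of all edges of $G$ between vertices of $V_{cover}$ together with, for each vertex $u\in V_{cover}$, the $|V_{cover}|+1$ maximum weight edges from $u$ to vertices in $V\setminus V_{cover}$ (all such edges if there are fewer). If $M'$ is a $(1+\epsilon)$-approximate maximum weight matching in $G'$, then it is also a $(1+\epsilon)$-approximate maximum weight matching in $G$.
   Context: A vertex cover is a set of vertices containing at least one endpoint of every edge. For a matching $M$, $w(M)=\sum_{e\in M}w(e)$; $M$ is a $(1+\epsilon)$-approximate maximum weight matching of $H$ if $w(M)\ge\frac{1}{1+\epsilon}$ times the maximum weight of a matching of $H$. *)

theory Defs
  imports Complex_Main
begin

definition graph :: "'a set \<Rightarrow> 'a set set \<Rightarrow> bool" where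
  "graph V E \<longleftrightarrow> finite V \<and> (\<forall>e\<in>E. \<exists>x y. x \<in> V \<and> y \<in> V \<and> x \<noteq> y \<and> e = {x, y})"

definition vertex_cover :: "'a set set \<Rightarrow> 'a set \<Rightarrow> bool" where
  "vertex_cover E C \<longleftrightarrow> (\<forall>e\<in>E. e \<inter> C \<noteq> {})"

definition matching :: "'a set set \<Rightarrow> 'a set set \<Rightarrow> bool" where
  "matching E M \<longleftrightarrow> M \<subseteq> E \<and> (\<forall>e1\<in>M. \<forall>e2\<in>M. e1 \<noteq> e2 \<longrightarrow> e1 \<inter> e2 = {})"

definition weight :: "('a set \<Rightarrow> real) \<Rightarrow> 'a set set \<Rightarrow> real" where
  "weight w M = (\<Sum>e\<in>M. w e)"

text \<open>Maximum weight of a matching (the empty matching is always a matching).\<close>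
definition max_matching_weight :: "'a set set \<Rightarrow> ('a set \<Rightarrow> real) \<Rightarrow> real" where
  "max_matching_weight E w = Max {weight w M | M. matching E M}"

definition approx_max_matching ::
  "real \<Rightarrow> 'a set set \<Rightarrow> ('a set \<Rightarrow> real) \<Rightarrow> 'a set set \<Rightarrow> bool" where
  "approx_max_matching eps E w M \<longleftrightarrow>
     matching E M \<and> weight w M \<ge> max_matching_weight E w / (1 + eps)"

definition out_edges :: "'a set set \<Rightarrow> 'a set \<Rightarrow> 'a \<Rightarrow> 'a set set" where
  "out_edges E C u = {e \<in> E. u \<in> e \<and> \<not> e \<subseteq> C}"

definition top_selection ::
  "'a set set \<Rightarrow> ('a set \<Rightarrow> real) \<Rightarrow> 'a set \<Rightarrow> ('a \<Rightarrow> 'a set set) \<Rightarrow> bool" where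
  "top_selection E w C S \<longleftrightarrow>
     (\<forall>u\<in>C. S u \<subseteq> out_edges E C u
        \<and> card (S u) = min (card C + 1) (card (out_edges E C u))
        \<and> (\<forall>e\<in>S u. \<forall>f\<in>out_edges E C u - S u. w f \<le> w e))"

definition sparsified :: "'a set set \<Rightarrow> 'a set \<Rightarrow> ('a \<Rightarrow> 'a set set) \<Rightarrow> 'a set set" where
  "sparsified E C S = {e \<in> E. e \<subseteq> C} \<union> (\<Union>u\<in>C. S u)"

end

theory Submission
  imports Defs
begin

lemma graph_finE: "graph V E \<Longrightarrow> finite E"
  unfolding graph_def
  by (rule finite_subset[of E "Pow V"]) auto

lemma exchange:
  assumes G: "graph V E" and CV: "C \<subseteq> V" and VC: "vertex_cover E C"
    and TS: "top_selection E w C S" and M: "matching E M" and eM: "e \<in> M"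
    and eS: "e \<notin> sparsified E C S"
  shows "\<exists>f. matching E (insert f (M - {e})) \<and> f \<in> sparsified E C S \<and> w e \<le> w f \<and> f \<notin> M"
proof -
  have eE: "e \<in> E" using M eM unfolding matching_def by auto
  then obtain u where uC: "u \<in> C" and ue: "u \<in> e" using VC unfolding vertex_cover_def by auto
  have nsub: "\<not> e \<subseteq> C" using eS eE unfolding sparsified_def by auto
  have eout: "e \<in> out_edges E C u" using eE ue nsub unfolding out_edges_def by auto
  have eSu: "e \<notin> S u" using eS uC unfolding sparsified_def by auto
  have Su: "S u \<subseteq> out_edges E C u" and cardSu: "card (S u) = min (card C + 1) (card (out_edges E C u))"
    and best: "\<forall>e'\<in>S u. \<forall>f\<in>out_edges E C u - S u. w f \<le> w e'"
    using TS uC unfolding top_selection_def by auto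
  have finE: "finite E" using G by (rule graph_finE)
  have finout: "finite (out_edges E C u)" using finE unfolding out_edges_def by auto
  have "card (S u) < card (out_edges E C u)"
  proof (rule psubset_card_mono[OF finout])
    show "S u \<subset> out_edges E C u" using Su eout eSu by blast
  qed
  hence cS: "card (S u) = card C + 1" using cardSu by linarith
  have finC: "finite C" using G CV unfolding graph_def by (auto intro: finite_subset)
  have yex: "\<forall>f\<in>S u. \<exists>y. f = {u,y} \<and> y \<notin> C"
  proof
    fix f assume "f \<in> S u"
    hence "f \<in> E" "u \<in> f" "\<not> f \<subseteq> C" using Su unfolding out_edges_def by auto
    then obtain a b where "f = {a,b}" using G unfolding graph_def by blast
    with \<open>u \<in> f\<close> \<open>\<not> f \<subseteq> C\<close> uC show "\<exists>y. f = {u,y} \<and> y \<notin> C" by auto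
  qed
  have disj: "\<forall>g\<in>M. \<forall>h\<in>M. g \<noteq> h \<longrightarrow> g \<inter> h = {}" and ME: "M \<subseteq> E"
    using M unfolding matching_def by auto
  define B where "B = {f \<in> S u. \<exists>g\<in>M - {e}. f \<inter> g \<noteq> {}}"
  define c where "c f = (SOME c. c \<in> C \<and> (\<exists>g\<in>M-{e}. c \<in> g \<and> f \<inter> g \<noteq> {}))" for f
  have cprop: "c f \<in> C \<and> (\<exists>g\<in>M-{e}. c f \<in> g \<and> f \<inter> g \<noteq> {})" if "f \<in> B" for f
  proof -
    from that obtain g where g: "g \<in> M - {e}" "f \<inter> g \<noteq> {}" unfolding B_def by auto
    have "g \<in> E" using g ME by auto
    then obtain c0 where "c0 \<in> C" "c0 \<in> g" using VC unfolding vertex_cover_def by auto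
    hence "\<exists>c. c \<in> C \<and> (\<exists>g\<in>M-{e}. c \<in> g \<and> f \<inter> g \<noteq> {})" using g by blast
    thus ?thesis unfolding c_def by (rule someI_ex)
  qed
  have inj: "inj_on c B"
  proof (rule inj_onI)
    fix f f' assume fB: "f \<in> B" and fB': "f' \<in> B" and eq: "c f = c f'"
    obtain g where g: "g \<in> M-{e}" "c f \<in> g" "f \<inter> g \<noteq> {}" and cC: "c f \<in> C" using cprop[OF fB] by auto
    obtain g' where g': "g' \<in> M-{e}" "c f' \<in> g'" "f' \<inter> g' \<noteq> {}" using cprop[OF fB'] by auto
    have "g = g'"
    proof (rule ccontr)
      assume "g \<noteq> g'"
      hence "g \<inter> g' = {}" using disj g(1) g'(1) by auto
      thus False using g(2) g'(2) eq by auto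
    qed
    obtain y where y: "f = {u,y}" "y \<notin> C" using yex fB unfolding B_def by auto
    obtain y' where y': "f' = {u,y'}" "y' \<notin> C" using yex fB' unfolding B_def by auto
    have "e \<inter> g = {}" using disj eM g(1) by auto
    hence ug: "u \<notin> g" using ue by auto
    have "y \<in> g" using y g ug by auto
    have "y' \<in> g" using y' g' ug \<open>g = g'\<close> by auto
    have "g \<in> E" using g ME by auto
    then obtain a b where "g = {a,b}" using G unfolding graph_def by blast
    hence "y = y'" using \<open>y \<in> g\<close> \<open>y' \<in> g\<close> g(2) cC y(2) y'(2) by auto
    thus "f = f'" using y y' by simp
  qed
  have img: "c ` B \<subseteq> C - {u}"
  proof
    fix z assume "z \<in> c ` B"
    then obtain f where f: "f \<in> B" "z = c f" by auto
    obtain g where g: "g \<in> M-{e}" "c f \<in> g" and "c f \<in> C" using cprop[OF f(1)] by auto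
    have "e \<inter> g = {}" using disj eM g(1) by auto
    hence "u \<notin> g" using ue by auto
    thus "z \<in> C - {u}" using f g \<open>c f \<in> C\<close> by auto
  qed
  have "card B \<le> card (C - {u})"
    using card_inj_on_le[OF inj img] finC by auto
  also have "\<dots> < card (S u)" using cS finC uC by auto
  finally have "card B < card (S u)" .
  hence "\<not> S u \<subseteq> B"
  proof -
    have "finite B" using finout Su unfolding B_def by (auto intro: finite_subset)
    thus ?thesis using \<open>card B < card (S u)\<close> card_mono[of B "S u"] by linarith
  qed
  then obtain f where fS: "f \<in> S u" and fB: "f \<notin> B" by auto
  have fE: "f \<in> E" using fS Su unfolding out_edges_def by auto
  have fnM: "f \<notin> M"
  proof
    assume "f \<in> M"
    have "f \<noteq> e" using fS eSu by auto
    have "f \<noteq> {}" using yex fS by auto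
    hence "f \<in> B" using fS \<open>f \<in> M\<close> \<open>f \<noteq> e\<close> unfolding B_def by auto
    thus False using fB by simp
  qed
  have fdisj: "\<forall>g\<in>M-{e}. f \<inter> g = {}" using fB fS unfolding B_def by auto
  have "matching E (insert f (M - {e}))"
    unfolding matching_def
  proof (intro conjI ballI impI)
    show "insert f (M - {e}) \<subseteq> E" using fE ME by auto
  next
    fix e1 e2 assume "e1 \<in> insert f (M - {e})" "e2 \<in> insert f (M - {e})" "e1 \<noteq> e2"
    thus "e1 \<inter> e2 = {}" using disj fdisj by auto
  qed
  moreover have "f \<in> sparsified E C S" using fS uC unfolding sparsified_def by auto
  moreover have "w e \<le> w f" using best fS eout eSu by auto
  ultimately show ?thesis using fnM by blast
qed

lemma improve:
  assumes G: "graph V E" and CV: "C \<subseteq> V" and VC: "vertex_cover E C"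
    and TS: "top_selection E w C S"
  shows "matching E M \<Longrightarrow> \<exists>M2. matching (sparsified E C S) M2 \<and> weight w M \<le> weight w M2"
proof (induction "card (M - sparsified E C S)" arbitrary: M rule: less_induct)
  case less
  have finE: "finite E" using G by (rule graph_finE)
  have finM: "finite M" using less.prems finE unfolding matching_def by (auto intro: finite_subset)
  show ?case
  proof (cases "M - sparsified E C S = {}")
    case True
    hence "matching (sparsified E C S) M" using less.prems unfolding matching_def by auto
    thus ?thesis by auto
  next
    case False
    then obtain e where e: "e \<in> M" "e \<notin> sparsified E C S" by auto
    from exchange[OF G CV VC TS less.prems e] obtain f where
      f: "matching E (insert f (M - {e}))" "f \<in> sparsified E C S" "w e \<le> w f" "f \<notin> M" by blast
    let ?M = "insert f (M - {e})"
    have "?M - sparsified E C S = (M - sparsified E C S) - {e}" using f(2) by auto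
    hence "card (?M - sparsified E C S) < card (M - sparsified E C S)"
    proof -
      have "e \<in> M - sparsified E C S" using e by blast
      moreover have "finite (M - sparsified E C S)" using finM by simp
      ultimately have "card ((M - sparsified E C S) - {e}) < card (M - sparsified E C S)"
        by (rule card_Diff1_less[rotated])
      thus ?thesis using \<open>?M - sparsified E C S = (M - sparsified E C S) - {e}\<close> by simp
    qed
    from less.hyps[OF this f(1)] obtain M2 where
      M2: "matching (sparsified E C S) M2" "weight w ?M \<le> weight w M2" by blast
    have "weight w ?M = weight w (M - {e}) + w f"
      unfolding weight_def using finM f(4) by (simp add: add.commute)
    moreover have "weight w M = weight w (M - {e}) + w e"
      unfolding weight_def using finM e(1) by (simp add: sum.remove add.commute)
    ultimately show ?thesis using M2 f(3) by auto
  qed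
qed

lemma fin_match: "finite E \<Longrightarrow> finite {weight w M | M. matching E M}"
proof -
  assume "finite E"
  hence "finite (Pow E)" by simp
  moreover have "{weight w M | M. matching E M} \<subseteq> weight w ` Pow E"
    unfolding matching_def by auto
  ultimately show ?thesis by (meson finite_surj)
qed

theorem lemma15:
  fixes V :: "'a set" and E :: "'a set set" and w :: "'a set \<Rightarrow> real"
    and C :: "'a set" and S :: "'a \<Rightarrow> 'a set set" and M' :: "'a set set" and eps :: real
  assumes "graph V E"
    and "C \<subseteq> V" and "vertex_cover E C"
    and "top_selection E w C S"
    and "eps > 0"
    and "approx_max_matching eps (sparsified E C S) w M'"
  shows "approx_max_matching eps E w M'"
proof -
  have finE: "finite E" using assms(1) by (rule graph_finE)
  have subE: "sparsified E C S \<subseteq> E"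
    using assms(4) unfolding sparsified_def top_selection_def out_edges_def by auto
  have finS: "finite (sparsified E C S)" using finite_subset[OF subE finE] .
  have mM: "matching (sparsified E C S) M'" and wM: "weight w M' \<ge> max_matching_weight (sparsified E C S) w / (1 + eps)"
    using assms(6) unfolding approx_max_matching_def by auto
  have mE: "matching E M'" using mM subE unfolding matching_def by auto
  have ne: "{weight w M | M. matching E M} \<noteq> {}"
    by (rule ccontr) (auto simp: matching_def)
  have "max_matching_weight E w \<in> {weight w M | M. matching E M}"
    unfolding max_matching_weight_def using fin_match[OF finE] ne by (rule Max_in)
  then obtain M where M: "matching E M" "max_matching_weight E w = weight w M" by auto
  obtain M2 where M2: "matching (sparsified E C S) M2" "weight w M \<le> weight w M2"
    using improve[OF assms(1-4) M(1)] by blast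
  have "weight w M2 \<le> max_matching_weight (sparsified E C S) w"
    unfolding max_matching_weight_def using fin_match[OF finS] M2(1) by (auto intro: Max_ge)
  hence "max_matching_weight E w \<le> max_matching_weight (sparsified E C S) w" using M M2 by simp
  hence "max_matching_weight E w / (1 + eps) \<le> max_matching_weight (sparsified E C S) w / (1+eps)"
    using assms(5) by (simp add: divide_right_mono)
  thus ?thesis using wM mE unfolding approx_max_matching_def by simp
qed

end
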